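(* Let $(c_t)_{t=0}^\infty\subset\mathbb{S}^1$ be a sequence of unit vectors in $\mathbb{R}^2$ and $\omega:\mathsf{P}^2_+\to\mathbb{R}_{\ge0}$ a function with $\omega(X)\le C\sqrt{\lambda_{\max}(X)}$ for all $X\in\mathsf{P}^2_+$, for some constant $C>0$. Let $\lambda_0\ge4\sqrt2\,C+2$ and define $V_t\in\mathbb{R}^{2\times2}$ by $$V_0=\lambda_0\mathbb{I}_{2\times2},\qquad V_{t+1}=V_t+\omega(V_t)\big(a^+_{t+1}(a^+_{t+1})^{\mathsf T}+a^-_{t+1}(a^-_{t+1})^{\mathsf T}\big),$$ where $$a^\pm_{t+1}=\frac{c_t\pm\frac{1}{\sqrt{\lambda_{\min}(V_t)}}v_{t,\min}}{\sqrt{1\pm\frac{2\langle c_t,v_{t,\min}\rangle}{\sqrt{\lambda_{\min}(V_t)}}+\frac{1}{\lambda_{\min}(V_t)}}}$$ and $v_{t,\min}$ is a normalized eigenvector of $V_t$ for its minimum eigenvalue. Then $\lambda_{\min}(V_t)\ge\sqrt{2\lambda_{\max}(V_t)}$ for all $t\ge0$.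
   Context: $\mathsf{P}^2_+$ denotes the set of real positive semidefinite $2\times2$ matrices; $\lambda_{\min},\lambda_{\max}$ are the minimal and maximal eigenvalues. *)

theory Defs
  imports "HOL-Analysis.Analysis"
begin

definition psd2 :: "real^2^2 \<Rightarrow> bool" where
  "psd2 X \<longleftrightarrow> transpose X = X \<and> (\<forall>x. 0 \<le> x \<bullet> (X *v x))"

definition eigvals2 :: "real^2^2 \<Rightarrow> real set" where
  "eigvals2 X = {l. \<exists>v. v \<noteq> 0 \<and> X *v v = l *\<^sub>R v}"

definition lam_min :: "real^2^2 \<Rightarrow> real" where
  "lam_min X = Min (eigvals2 X)"

definition lam_max :: "real^2^2 \<Rightarrow> real" where
  "lam_max X = Max (eigvals2 X)"

definition outer2 :: "real^2 \<Rightarrow> real^2^2" where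
  "outer2 a = (\<chi> i j. a $ i * a $ j)"

end

theory Submission
  imports Defs
begin

lemma inner2: "(x::real^2) \<bullet> y = x$1*y$1 + x$2*y$2"
  by (simp add: inner_vec_def sum_2)
lemma mv2: "((A::real^2^2) *v x)$1 = A$1$1*x$1 + A$1$2*x$2" "(A *v x)$2 = A$2$1*x$1 + A$2$2*x$2"
  by (simp_all add: matrix_vector_mult_def sum_2)
lemma norm2: "(norm (x::real^2))^2 = x$1^2 + x$2^2"
  unfolding power2_norm_eq_inner inner2 by (simp add: power2_eq_square)
lemma vec2_eq: "(x::real^2) = y \<longleftrightarrow> x$1 = y$1 \<and> x$2 = y$2"
  by (metis exhaust_2 vec_eq_iff)

lemma eig_char:
  assumes "(X::real^2^2) *v v = l *\<^sub>R v" "v \<noteq> 0"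
  shows "(X$1$1 - l)*(X$2$2 - l) - X$1$2*X$2$1 = 0"
proof -
  have e1: "X$1$1* v$1 + X$1$2* v$2 = l* v$1" and e2: "X$2$1* v$1 + X$2$2* v$2 = l* v$2"
    using assms(1) by (simp_all add: vec2_eq mv2)
  have nz: "v$1 \<noteq> 0 \<or> v$2 \<noteq> 0" using assms(2) vec2_eq by (metis zero_index)
  have a: "((X$1$1 - l)*(X$2$2 - l) - X$1$2*X$2$1) * v$1 = 0"
    using e1 e2 by algebra
  have b: "((X$1$1 - l)*(X$2$2 - l) - X$1$2*X$2$1) * v$2 = 0"
    using e1 e2 by algebra
  show ?thesis using a b nz by auto
qed

lemma eig_other:
  assumes "(X::real^2^2) *v v = l *\<^sub>R v" "v \<noteq> 0" "X$1$2 = X$2$1"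
  shows "X$1$1 + X$2$2 - l \<in> eigvals2 X"
proof -
  define u :: "real^2" where "u = vector [- v$2, v$1]"
  have e1: "X$1$1* v$1 + X$1$2* v$2 = l* v$1" and e2: "X$2$1* v$1 + X$2$2* v$2 = l* v$2"
    using assms(1) by (simp_all add: vec2_eq mv2)
  have nz: "v$1 \<noteq> 0 \<or> v$2 \<noteq> 0" using assms(2) vec2_eq by (metis zero_index)
  have "u \<noteq> 0" using nz by (auto simp: u_def vec2_eq)
  moreover have "X *v u = (X$1$1 + X$2$2 - l) *\<^sub>R u"
    unfolding vec2_eq mv2 using e1 e2 assms(3) by (simp add: u_def algebra_simps)
  ultimately show ?thesis unfolding eigvals2_def by blast
qed

lemma eig_cases:
  assumes "a \<in> eigvals2 (X::real^2^2)" "l \<in> eigvals2 X"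
  shows "l = a \<or> l = X$1$1 + X$2$2 - a"
proof -
  have "(X$1$1 - a)*(X$2$2 - a) - X$1$2*X$2$1 = 0" "(X$1$1 - l)*(X$2$2 - l) - X$1$2*X$2$1 = 0"
    using assms eig_char unfolding eigvals2_def by blast+
  then have "(l - a) * (l - (X$1$1 + X$2$2 - a)) = 0" by algebra
  then show ?thesis by auto
qed

lemma psd2_iff: "psd2 (X::real^2^2) \<longleftrightarrow> X$1$2 = X$2$1 \<and> (\<forall>x. 0 \<le> x \<bullet> (X *v x))"
proof -
  have "transpose X = X \<longleftrightarrow> X$1$2 = X$2$1"
    unfolding transpose_def vec_eq_iff forall_2 by auto
  then show ?thesis unfolding psd2_def by simp
qed

lemma lam_facts:
  assumes sym: "(X::real^2^2)$1$2 = X$2$1" and nv: "norm v = 1" and ev: "X *v v = lam_min X *\<^sub>R v"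
  shows "lam_min X \<le> X$1$1 + X$2$2 - lam_min X"
    and "lam_max X \<le> max (lam_min X) (X$1$1 + X$2$2 - lam_min X)"
proof -
  let ?S = "eigvals2 X" and ?l = "lam_min X"
  have v0: "v \<noteq> 0" using nv by auto
  have l_in: "?l \<in> ?S" using ev v0 unfolding eigvals2_def by blast
  have o_in: "X$1$1 + X$2$2 - ?l \<in> ?S" using eig_other[OF ev v0 sym] .
  have sub: "?S \<subseteq> {?l, X$1$1 + X$2$2 - ?l}" using eig_cases[OF l_in] by blast
  have fin: "finite ?S" using sub finite_subset by blast
  show "?l \<le> X$1$1 + X$2$2 - ?l" unfolding lam_min_def using Min_le[OF fin o_in] by (simp add: lam_min_def)
  have "Max ?S \<in> ?S" using Max_in[OF fin] l_in by blast
  then show "lam_max X \<le> max ?l (X$1$1 + X$2$2 - ?l)" using sub unfolding lam_max_def by auto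
qed

lemma quadform:
  assumes sym: "(X::real^2^2)$1$2 = X$2$1" and nv: "norm v = 1" and ev: "X *v v = l *\<^sub>R v"
    and nx: "norm x = 1"
  shows "x \<bullet> (X *v x) = l * (x \<bullet> v)^2 + (X$1$1 + X$2$2 - l) * (1 - (x \<bullet> v)^2)"
proof -
  have e1: "X$1$1 * v$1 + X$1$2 * v$2 = l * v$1" and e2: "X$2$1 * v$1 + X$2$2 * v$2 = l * v$2"
    using ev by (simp_all add: vec2_eq mv2)
  have n1: "v$1^2 + v$2^2 = 1" using nv norm2[of v] by simp
  have n2: "x$1^2 + x$2^2 = 1" using nx norm2[of x] by simp
  show ?thesis unfolding inner2 mv2 using e1 e2 n1 n2 sym by algebra
qed

lemma outer_qf: "x \<bullet> (outer2 a *v x) = (a \<bullet> x)^2"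
  by (simp add: inner2 mv2 outer2_def power2_eq_square algebra_simps)

lemma outer_tr: "outer2 a $1$1 + outer2 a $2$2 = (norm a)^2"
  using norm2[of a] by (simp add: outer2_def power2_eq_square)

lemma outer_sym: "outer2 a $1$2 = outer2 a $2$1"
  by (simp add: outer2_def)

lemma smv: "((r::real) *\<^sub>R (B::real^2^2)) *v x = r *\<^sub>R (B *v x)"
  by (simp add: vec2_eq mv2 algebra_simps)

lemma qf_split: "(x::real^2) \<bullet> (((A::real^2^2) + r *\<^sub>R (B + C)) *v x) = x \<bullet> (A *v x) + r * (x \<bullet> (B *v x) + x \<bullet> (C *v x))"
  by (simp add: matrix_vector_mult_add_rdistrib smv inner_add_right algebra_simps)

lemma cs_frac:
  fixes a b X Y :: real
  assumes "a > 0" "b > 0"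
  shows "X^2/a + Y^2/b \<ge> (X - Y)^2/(a+b)"
proof -
  have "X^2/a + Y^2/b - (X - Y)^2/(a+b) = (b*X + a*Y)^2/(a*b*(a+b))"
    using assms by (simp add: field_simps power2_eq_square)
  also have "\<dots> \<ge> 0" using assms by simp
  finally show ?thesis by simp
qed

lemma key_real:
  fixes l mu W m P :: real
  assumes P: "0 \<le> P" "P \<le> 1" and W: "W \<ge> 0" and m: "m \<ge> 0" "m * (l + 1) \<ge> 2 * P"
    and mu: "mu \<ge> l" and l2: "l \<ge> 2" and d: "l^2 \<ge> 2 * mu" and Wb: "4 * W \<le> l * (l - 2)"
  defines "f \<equiv> l * P + mu * (1 - P) + W * m"
  shows "f \<ge> l" "f^2 + 2 * f \<ge> 2 * (l + mu + 2 * W)"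
proof -
  define G where "G = mu - l"
  define Q where "Q = 1 - P"
  have G0: "G \<ge> 0" using mu G_def by simp
  have Q: "0 \<le> Q" "Q \<le> 1" using P Q_def by auto
  define F where "F = l + G * Q"
  have fF: "f = F + W * m" unfolding f_def F_def G_def Q_def by (simp add: algebra_simps)
  have Fl: "F \<ge> l" using G0 Q F_def by simp
  have Wm: "W * m \<ge> 0" using W m by simp
  show "f \<ge> l" using fF Fl Wm by simp
  have "f^2 + 2 * f = F^2 + 2*F + 2 * W * m * (F + 1) + (W*m)^2"
    using fF by (simp add: power2_eq_square algebra_simps)
  also have "\<dots> \<ge> F^2 + 2*F + 2 * W * m * (l + 1)"
  proof -
    have "2 * W * m * (F + 1) \<ge> 2 * W * m * (l + 1)"
      using Fl Wm by (intro mult_left_mono) auto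
    then show ?thesis using zero_le_power2[of "W*m"] by linarith
  qed
  finally have s1: "f^2 + 2 * f \<ge> F^2 + 2*F + 4 * W * P"
  proof -
    have "W * (2 * P) \<le> W * (m * (l + 1))" using mult_left_mono[OF m(2) W] .
    then show "F\<^sup>2 + 2 * F + 2 * W * m * (l + 1) \<le> f\<^sup>2 + 2 * f \<Longrightarrow> F\<^sup>2 + 2 * F + 4 * W * P \<le> f\<^sup>2 + 2 * f"
      by (simp add: algebra_simps)
  qed
  have s2: "F^2 + 2*F \<ge> l^2 + 2*l + 2*G*(l+1)*Q"
  proof -
    have "F^2 + 2*F = l^2 + 2*l + 2*G*(l+1)*Q + (G*Q)^2"
      unfolding F_def by (simp add: power2_eq_square algebra_simps)
    then show ?thesis by simp
  qed
  have s3: "l^2 - 2*mu + 2*G*(l+1)*Q \<ge> l*(l-2)*Q"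
  proof -
    have "l^2 - 2*mu \<ge> (l^2 - 2*mu) * Q" using d Q by (simp add: mult_left_le)
    moreover have "2*G*(l+1)*Q \<ge> 2*G*Q"
    proof -
      have "1*Q \<le> (l+1)*Q" using Q l2 by (intro mult_right_mono) auto
      then have "G*(1*Q) \<le> G*((l+1)*Q)" using G0 by (intro mult_left_mono)
      then show ?thesis by (simp add: algebra_simps)
    qed
    moreover have "(l^2 - 2*mu) * Q + 2*G*Q = l*(l-2)*Q" unfolding G_def by (simp add: power2_eq_square algebra_simps)
    ultimately show ?thesis by linarith
  qed
  have s4: "l*(l-2)*Q \<ge> 4*W*Q" using Wb Q by (simp add: mult_right_mono)
  have "P + Q = 1" using Q_def by simp
  show "f^2 + 2 * f \<ge> 2 * (l + mu + 2 * W)"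
  proof -
    have h: "4*W*P + 4*W*Q = 4*W" using \<open>P + Q = 1\<close> by (metis distrib_left mult_1_right)
    show ?thesis using s1 s2 s3 s4 h by (smt (verit))
  qed
qed

lemma step:
  fixes V V' :: "real^2^2" and c v v' :: "real^2" and W C lam0 :: real
  assumes psd: "psd2 V" and l0: "lam0 \<le> lam_min V"
    and inv: "2 * (V$1$1 + V$2$2 - lam_min V) \<le> (lam_min V)^2"
    and lam0_ge: "lam0 \<ge> 4 * sqrt 2 * C + 2" and C_pos: "C > 0"
    and nc: "norm c = 1" and nv: "norm v = 1" and ev: "V *v v = lam_min V *\<^sub>R v"
    and nv': "norm v' = 1" and ev': "V' *v v' = lam_min V' *\<^sub>R v'"
    and W0: "W \<ge> 0" and WC: "W \<le> C * sqrt (lam_max V)"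
    and VS: "V' = V + W *\<^sub>R
        (outer2 ((1 / sqrt (1 + 2 * (c \<bullet> v) / sqrt (lam_min V) + 1 / lam_min V))
                   *\<^sub>R (c + (1 / sqrt (lam_min V)) *\<^sub>R v))
       + outer2 ((1 / sqrt (1 - 2 * (c \<bullet> v) / sqrt (lam_min V) + 1 / lam_min V))
                   *\<^sub>R (c - (1 / sqrt (lam_min V)) *\<^sub>R v)))"
  shows "psd2 V' \<and> lam0 \<le> lam_min V' \<and> 2 * (V'$1$1 + V'$2$2 - lam_min V') \<le> (lam_min V')^2"
proof -
  define l where "l = lam_min V"
  define mu where "mu = V$1$1 + V$2$2 - l"
  define s where "s = 1 / sqrt l"
  define \<alpha> where "\<alpha> = c \<bullet> v"
  define np where "np = 1 + 2 * \<alpha> / sqrt l + 1 / l"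
  define nm where "nm = 1 - 2 * \<alpha> / sqrt l + 1 / l"
  define ap where "ap = (1 / sqrt np) *\<^sub>R (c + s *\<^sub>R v)"
  define am where "am = (1 / sqrt nm) *\<^sub>R (c - s *\<^sub>R v)"
  have VS': "V' = V + W *\<^sub>R (outer2 ap + outer2 am)"
    using VS unfolding ap_def am_def np_def nm_def s_def \<alpha>_def l_def by simp
  have sym: "V$1$2 = V$2$1" using psd psd2_iff by blast
  have psdq: "\<And>x. 0 \<le> x \<bullet> (V *v x)" using psd psd2_iff by blast
  have lmu: "l \<le> mu" and lmax: "lam_max V \<le> max l mu"
    using lam_facts[OF sym nv ev] unfolding l_def mu_def by auto
  have sq2: "sqrt 2 > 0" by simp
  have "lam0 \<ge> 2" using lam0_ge C_pos sq2 by (smt (verit) mult_pos_pos)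
  then have l2: "l \<ge> 2" using l0 l_def by simp
  have lpos: "l > 0" using l2 by simp
  have s2: "s^2 = 1/l" using lpos by (simp add: s_def power_divide)
  have spos: "s > 0" using lpos s_def by simp
  have sl1: "s < 1"
  proof -
    have "sqrt l > 1" using l2 by simp
    then show ?thesis unfolding s_def by simp
  qed
  have a1: "\<bar>\<alpha>\<bar> \<le> 1" using Cauchy_Schwarz_ineq2[of c v] nc nv \<alpha>_def by simp
  have s2': "(1/sqrt l)^2 = 1/l" using lpos by (simp add: power_divide)
  have np_eq: "np = 1 + 2 * s * \<alpha> + s^2" unfolding np_def s_def s2' by simp
  have nm_eq: "nm = 1 - 2 * s * \<alpha> + s^2" unfolding nm_def s_def s2' by simp
  have np_pos: "np > 0"
  proof -
    have "np - (1 - s)^2 = 2 * s * (1 + \<alpha>)" unfolding np_eq by (simp add: power2_eq_square algebra_simps)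
    moreover have "2 * s * (1 + \<alpha>) \<ge> 0" using spos a1 by simp
    moreover have "(1 - s)^2 > 0" using sl1 by simp
    ultimately show ?thesis by linarith
  qed
  have nm_pos: "nm > 0"
  proof -
    have "nm - (1 - s)^2 = 2 * s * (1 - \<alpha>)" unfolding nm_eq by (simp add: power2_eq_square algebra_simps)
    moreover have "2 * s * (1 - \<alpha>) \<ge> 0" using spos a1 by simp
    moreover have "(1 - s)^2 > 0" using sl1 by simp
    ultimately show ?thesis by linarith
  qed
  have cc: "c \<bullet> c = 1" and vv: "v \<bullet> v = 1" using nc nv by (simp_all add: dot_square_norm)
  have "(norm ap)^2 = (1 / sqrt np)^2 * (norm (c + s *\<^sub>R v))^2"
    unfolding ap_def norm_scaleR power_mult_distrib power2_abs ..
  also have "\<dots> = (1 / sqrt np)^2 * ((c + s *\<^sub>R v) \<bullet> (c + s *\<^sub>R v))"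
    by (simp only: power2_norm_eq_inner)
  also have "\<dots> = (1/np) * np"
    using np_pos cc vv by (simp add: inner_add_left inner_add_right np_eq \<alpha>_def inner_commute power2_eq_square algebra_simps)
  finally have nap: "(norm ap)^2 = 1" using np_pos by simp
  have "(norm am)^2 = (1 / sqrt nm)^2 * (norm (c - s *\<^sub>R v))^2"
    unfolding am_def norm_scaleR power_mult_distrib power2_abs ..
  also have "\<dots> = (1 / sqrt nm)^2 * ((c - s *\<^sub>R v) \<bullet> (c - s *\<^sub>R v))"
    by (simp only: power2_norm_eq_inner)
  also have "\<dots> = (1/nm) * nm"
    using nm_pos cc vv by (simp add: inner_diff_left inner_diff_right nm_eq \<alpha>_def inner_commute power2_eq_square algebra_simps)
  finally have nam: "(norm am)^2 = 1" using nm_pos by simp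
  have trV': "V'$1$1 + V'$2$2 = l + mu + 2 * W"
  proof -
    have "V'$1$1 + V'$2$2 = V$1$1 + V$2$2 + W * ((outer2 ap $1$1 + outer2 ap $2$2) + (outer2 am $1$1 + outer2 am $2$2))"
      unfolding VS' by (simp add: algebra_simps)
    then show ?thesis unfolding outer_tr nap nam mu_def by simp
  qed
  have symV': "V'$1$2 = V'$2$1" unfolding VS' using sym outer_sym by simp
  have qV': "\<And>x. x \<bullet> (V' *v x) = x \<bullet> (V *v x) + W * ((ap \<bullet> x)^2 + (am \<bullet> x)^2)"
    unfolding VS' qf_split outer_qf by simp
  have psd': "psd2 V'"
    unfolding psd2_iff using symV' qV' psdq W0 by (simp add: add_nonneg_nonneg)
  define l' where "l' = lam_min V'"
  define p where "p = v' \<bullet> v"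
  define m where "m = (ap \<bullet> v')^2 + (am \<bullet> v')^2"
  have v'v': "v' \<bullet> v' = 1" using nv' by (simp add: dot_square_norm)
  have "l' = v' \<bullet> (V' *v v')" unfolding ev' l'_def using v'v' by simp
  also have "\<dots> = l * p^2 + mu * (1 - p^2) + W * m"
    unfolding qV' quadform[OF sym nv ev[folded l_def] nv'] p_def m_def mu_def by simp
  finally have l'eq: "l' = l * p^2 + mu * (1 - p^2) + W * m" .
  have p1: "p^2 \<le> 1"
  proof -
    have "\<bar>p\<bar> \<le> 1" using Cauchy_Schwarz_ineq2[of v' v] nv nv' p_def by simp
    then show ?thesis by (metis abs_le_square_iff abs_one one_power2)
  qed
  have m0: "m \<ge> 0" unfolding m_def by simp
  have mb: "m * (l + 1) \<ge> 2 * p^2"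
  proof -
    have vp: "v \<bullet> v' = p" unfolding p_def by (rule inner_commute)
    have apv: "ap \<bullet> v' = (c \<bullet> v' + s * p) / sqrt np"
      unfolding ap_def by (simp add: inner_add_left vp)
    have amv: "am \<bullet> v' = (c \<bullet> v' - s * p) / sqrt nm"
      unfolding am_def by (simp add: inner_diff_left vp)
    have "m = (c \<bullet> v' + s * p)^2 / np + (c \<bullet> v' - s * p)^2 / nm"
      unfolding m_def apv amv using np_pos nm_pos by (simp add: power_divide)
    also have "\<dots> \<ge> ((c \<bullet> v' + s * p) - (c \<bullet> v' - s * p))^2 / (np + nm)"
      using cs_frac[OF np_pos nm_pos] by blast
    finally have "m \<ge> (2 * s * p)^2 / (2 + 2 * s^2)"
      unfolding np_eq nm_eq by (simp add: algebra_simps)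
    also have "(2 * s * p)^2 / (2 + 2 * s^2) = 2 * p^2 / (l + 1)"
      unfolding power_mult_distrib s2 using lpos by (simp add: field_simps)
    finally have "m \<ge> 2 * p^2 / (l + 1)" .
    then show ?thesis using lpos by (simp add: field_simps)
  qed
  have Wb: "4 * W \<le> l * (l - 2)"
  proof -
    have "mu \<le> l^2 / 2" using inv unfolding mu_def l_def by simp
    moreover have "l \<le> l^2 / 2" using l2 by (simp add: power2_eq_square)
    ultimately have "lam_max V \<le> l^2/2" using lmax by simp
    then have "sqrt (lam_max V) \<le> sqrt (l^2/2)" by simp
    also have "sqrt (l^2/2) = l / sqrt 2" using lpos by (simp add: real_sqrt_divide)
    finally have "W \<le> C * (l / sqrt 2)" using WC C_pos by (smt (verit) mult_left_mono)
    then have "4 * W \<le> 4 * C * l / sqrt 2" by simp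
    also have "4 * C * l / sqrt 2 = (4 * sqrt 2 * C) * l / 2"
      by (simp add: field_simps)
    also have "\<dots> \<le> (l - 2) * l / 2"
    proof -
      have "4 * sqrt 2 * C \<le> l - 2" using lam0_ge l0 l_def by simp
      then show ?thesis using lpos by (simp add: mult_right_mono divide_right_mono mult.commute mult.left_commute)
    qed
    also have "\<dots> \<le> l * (l - 2)" proof - have "0 \<le> (l - 2) * l" using l2 by simp then show ?thesis by (simp add: mult.commute) qed
    finally show ?thesis .
  qed
  have P0: "0 \<le> p^2" by simp
  note K = key_real[OF P0 p1 W0 m0 mb lmu l2 _ Wb]
  have d: "l^2 \<ge> 2 * mu" using inv unfolding mu_def l_def by simp
  have f1: "l' \<ge> l" and f2: "l'^2 + 2 * l' \<ge> 2 * (l + mu + 2 * W)"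
    using K[OF d] unfolding l'eq by auto
  show ?thesis
    using psd' f1 f2 l0 trV' unfolding l'_def[symmetric] l_def[symmetric] by simp
qed

theorem mainTheorem9:
  fixes c :: "nat \<Rightarrow> real^2" and w :: "real^2^2 \<Rightarrow> real"
    and C lam0 :: real and V :: "nat \<Rightarrow> real^2^2" and v :: "nat \<Rightarrow> real^2"
  assumes c_unit: "\<And>t. norm (c t) = 1"
    and C_pos: "C > 0"
    and w_nonneg: "\<And>X. psd2 X \<Longrightarrow> 0 \<le> w X"
    and w_bound: "\<And>X. psd2 X \<Longrightarrow> w X \<le> C * sqrt (lam_max X)"
    and lam0_ge: "lam0 \<ge> 4 * sqrt 2 * C + 2"
    and v_eig: "\<And>t. norm (v t) = 1 \<and> V t *v v t = lam_min (V t) *\<^sub>R v t"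
    and V0: "V 0 = lam0 *\<^sub>R mat 1"
    and VSuc: "\<And>t. V (Suc t) = V t + w (V t) *\<^sub>R
        (outer2 ((1 / sqrt (1 + 2 * (c t \<bullet> v t) / sqrt (lam_min (V t)) + 1 / lam_min (V t)))
                   *\<^sub>R (c t + (1 / sqrt (lam_min (V t))) *\<^sub>R v t))
       + outer2 ((1 / sqrt (1 - 2 * (c t \<bullet> v t) / sqrt (lam_min (V t)) + 1 / lam_min (V t)))
                   *\<^sub>R (c t - (1 / sqrt (lam_min (V t))) *\<^sub>R v t)))"
  shows "\<forall>t. lam_min (V t) \<ge> sqrt (2 * lam_max (V t))"
proof -
  have sq2: "sqrt 2 > 0" by simp
  have lam02: "lam0 \<ge> 2" using lam0_ge C_pos sq2 by (smt (verit) mult_pos_pos)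
  have inv: "psd2 (V t) \<and> lam0 \<le> lam_min (V t) \<and> 2 * (V t$1$1 + V t$2$2 - lam_min (V t)) \<le> (lam_min (V t))^2" for t
  proof (induction t)
    case 0
    have nv: "norm (v 0) = 1" and ev: "V 0 *v v 0 = lam_min (V 0) *\<^sub>R v 0" using v_eig by auto
    have "V 0 *v v 0 = lam0 *\<^sub>R v 0" unfolding V0 by (simp add: vec2_eq mv2 mat_def)
    then have "lam_min (V 0) *\<^sub>R v 0 = lam0 *\<^sub>R v 0" using ev by simp
    moreover have "v 0 \<noteq> 0" using nv by auto
    ultimately have lm: "lam_min (V 0) = lam0" by simp
    have e: "\<And>x::real^2. x$1*(lam0*x$1) + x$2*(lam0*x$2) = lam0*((x$1)^2 + (x$2)^2)"
      by (simp add: power2_eq_square algebra_simps)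
    have psd: "psd2 (V 0)"
      unfolding psd2_iff V0 using lam02
      by (simp add: inner2 mv2 mat_def e)
    have "2 * (lam0 + lam0 - lam0) \<le> lam0^2" using lam02 by (simp add: power2_eq_square)
    then show ?case using psd lm unfolding V0 by (simp add: mat_def)
  next
    case (Suc t)
    have I: "psd2 (V t)" "lam0 \<le> lam_min (V t)" "2 * (V t$1$1 + V t$2$2 - lam_min (V t)) \<le> (lam_min (V t))^2"
      using Suc by auto
    show ?case
      by (rule step[OF I(1) I(2) I(3) lam0_ge C_pos c_unit[of t] conjunct1[OF v_eig[of t]]
            conjunct2[OF v_eig[of t]] conjunct1[OF v_eig[of "Suc t"]] conjunct2[OF v_eig[of "Suc t"]]
            w_nonneg[OF I(1)] w_bound[OF I(1)] VSuc[of t]])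
  qed
  show ?thesis
  proof
    fix t
    define l where "l = lam_min (V t)"
    have psd: "psd2 (V t)" and l0: "lam0 \<le> l" and d: "2 * (V t$1$1 + V t$2$2 - l) \<le> l^2"
      using inv[of t] l_def by auto
    have sym: "V t $1$2 = V t $2$1" using psd psd2_iff by blast
    have lmax: "lam_max (V t) \<le> max l (V t$1$1 + V t$2$2 - l)"
      using lam_facts(2)[OF sym] v_eig l_def by blast
    have "l \<le> l^2/2" using l0 lam02 by (simp add: power2_eq_square)
    then have "2 * lam_max (V t) \<le> l^2" using lmax d by simp
    then have "sqrt (2 * lam_max (V t)) \<le> sqrt (l^2)" by (rule real_sqrt_le_mono)
    also have "\<dots> = l" using l0 lam02 by simp
    finally show "lam_min (V t) \<ge> sqrt (2 * lam_max (V t))" using l_def by simp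
  qed
qed

end
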